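(* Let $X$ be a topological space and $(Y,d)$ a metric space. Then the family $$\mathcal{B}=\{B_K(f,\epsilon): f\in C_{od}^\star(X,Y),\ K \text{ a nonempty compact subset of } \mathrm{dom}(f),\ \epsilon>0\}\cup\{C_{od}(X,Y)\}$$ is a basis for a topology on $C_{od}(X,Y)$.
   Context: $C_{od}(X,Y)$ is the set of continuous functions $f:\mathrm{dom}(f)\to Y$ whose domain $\mathrm{dom}(f)$ is an open subset of $X$ (including the empty function $\emptyset$), and $C_{od}^\star(X,Y)=C_{od}(X,Y)\setminus\{\emptyset\}$. For $f,g$ and a nonempty compact $K\subseteq\mathrm{dom}(f)\cap\mathrm{dom}(g)$, $d_K(f,g)=\sup_{x\in K}d(f(x),g(x))$. For $f\in C_{od}^\star(X,Y)$, $K$ a nonempty compact subset of $\mathrm{dom}(f)$ and $\epsilon>0$, $B_K(f,\epsilon)=\{g\in C_{od}^\star(X,Y): K\subseteq\mathrm{dom}(g)\text{ and } d_K(f,g)<\epsilon\}$. *)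

theory Defs
  imports "HOL-Analysis.Analysis"
begin

text \<open>Partial functions f : dom(f) -> Y are represented as partial maps 'a \<rightharpoonup> 'b;
  dom f is Map.dom f, the value at x in dom f is the (f x). The empty function is Map.empty.\<close>

definition Cod :: "'a topology \<Rightarrow> ('a \<rightharpoonup> 'b::metric_space) set" where
  "Cod X = {f. openin X (dom f) \<and>
              continuous_map (subtopology X (dom f)) euclidean (\<lambda>x. the (f x))}"

definition Cod_star :: "'a topology \<Rightarrow> ('a \<rightharpoonup> 'b::metric_space) set" where
  "Cod_star X = Cod X - {Map.empty}"

definition dK :: "'a set \<Rightarrow> ('a \<rightharpoonup> 'b::metric_space) \<Rightarrow> ('a \<rightharpoonup> 'b) \<Rightarrow> real" where
  "dK K f g = (SUP x\<in>K. dist (the (f x)) (the (g x)))"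

definition BK :: "'a topology \<Rightarrow> 'a set \<Rightarrow> ('a \<rightharpoonup> 'b::metric_space) \<Rightarrow> real \<Rightarrow> ('a \<rightharpoonup> 'b) set" where
  "BK X K f \<epsilon> = {g \<in> Cod_star X. K \<subseteq> dom g \<and> dK K f g < \<epsilon>}"

definition basis_for_topology_on :: "'c set \<Rightarrow> 'c set set \<Rightarrow> bool" where
  "basis_for_topology_on S \<B> \<longleftrightarrow>
     (\<exists>T::'c topology. topspace T = S \<and> (\<forall>U. openin T U \<longleftrightarrow> (\<exists>\<U>\<subseteq>\<B>. \<Union>\<U> = U)))"

end

theory Submission
  imports Defs
begin

lemma cod_img_bounded:
  assumes "f \<in> Cod X" "compactin X K" "K \<subseteq> dom f"
  shows "bounded ((\<lambda>x. the (f x)) ` K)"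
proof -
  have c: "continuous_map (subtopology X (dom f)) euclidean (\<lambda>x. the (f x))"
    using assms(1) by (simp add: Cod_def)
  have "compactin (subtopology X (dom f)) K" using assms by (simp add: compactin_subtopology)
  from image_compactin[OF this c] show ?thesis by (simp add: compact_imp_bounded)
qed

lemma dist_bdd:
  assumes "f \<in> Cod X" "g \<in> Cod X" "compactin X K" "K \<subseteq> dom f" "K \<subseteq> dom g"
  shows "bdd_above ((\<lambda>x. dist (the (f x)) (the (g x))) ` K)"
proof -
  obtain a e where a: "\<forall>y\<in>(\<lambda>x. the (f x)) ` K. dist a y \<le> e"
    using cod_img_bounded[OF assms(1,3,4)] unfolding bounded_def by blast
  obtain b e' where b: "\<forall>y\<in>(\<lambda>x. the (g x)) ` K. dist b y \<le> e'"
    using cod_img_bounded[OF assms(2,3,5)] unfolding bounded_def by blast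
  have "dist (the (f x)) (the (g x)) \<le> e + dist a b + e'" if "x \<in> K" for x
  proof -
    have "dist (the (f x)) (the (g x)) \<le> dist (the (f x)) a + dist a (the (g x))"
      by (rule dist_triangle)
    also have "\<dots> \<le> dist (the (f x)) a + (dist a b + dist b (the (g x)))"
      using dist_triangle by simp
    moreover have "dist a (the (f x)) \<le> e" "dist b (the (g x)) \<le> e'" using a b that by auto
    ultimately show ?thesis by (simp add: dist_commute)
  qed
  then show ?thesis by (auto intro!: bdd_aboveI2)
qed

lemma dK_triangle:
  assumes "f \<in> Cod X" "g \<in> Cod X" "h \<in> Cod X" "compactin X K" "K \<noteq> {}"
    "K \<subseteq> dom f" "K \<subseteq> dom g" "K \<subseteq> dom h"
  shows "dK K f h \<le> dK K f g + dK K g h"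
  unfolding dK_def
proof (rule cSUP_least[OF assms(5)])
  fix x assume x: "x \<in> K"
  have "dist (the (f x)) (the (h x)) \<le> dist (the (f x)) (the (g x)) + dist (the (g x)) (the (h x))"
    by (rule dist_triangle)
  also have "\<dots> \<le> (SUP x\<in>K. dist (the (f x)) (the (g x))) + (SUP x\<in>K. dist (the (g x)) (the (h x)))"
    using cSUP_upper[OF x dist_bdd[OF assms(1,2,4,6,7)]] cSUP_upper[OF x dist_bdd[OF assms(2,3,4,7,8)]]
    by linarith
  finally show "dist (the (f x)) (the (h x)) \<le> (SUP x\<in>K. dist (the (f x)) (the (g x))) + (SUP x\<in>K. dist (the (g x)) (the (h x)))" .
qed

lemma dK_mono:
  assumes "f \<in> Cod X" "g \<in> Cod X" "compactin X K" "K1 \<noteq> {}" "K1 \<subseteq> K"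
    "K \<subseteq> dom f" "K \<subseteq> dom g"
  shows "dK K1 f g \<le> dK K f g"
  unfolding dK_def
  by (rule cSUP_subset_mono[OF assms(4) dist_bdd[OF assms(1,2,3,6,7)] assms(5)]) simp

lemma basis_step:
  fixes g :: "'a \<rightharpoonup> 'b::metric_space"
  assumes f1: "f1 \<in> Cod_star X" "K1 \<noteq> {}" "compactin X K1" "K1 \<subseteq> dom f1" "e1 > 0"
    and f2: "f2 \<in> Cod_star X" "K2 \<noteq> {}" "compactin X K2" "K2 \<subseteq> dom f2" "e2 > 0"
    and g: "g \<in> BK X K1 f1 e1" "g \<in> BK X K2 f2 e2"
  shows "\<exists>K \<delta>. g \<in> BK X K g \<delta> \<and> BK X K g \<delta> \<subseteq> BK X K1 f1 e1 \<inter> BK X K2 f2 e2 \<and>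
     K \<noteq> {} \<and> compactin X K \<and> K \<subseteq> dom g \<and> \<delta> > 0"
proof -
  define K where "K = K1 \<union> K2"
  have gc: "g \<in> Cod_star X" "K1 \<subseteq> dom g" "K2 \<subseteq> dom g" "dK K1 f1 g < e1" "dK K2 f2 g < e2"
    using g by (auto simp: BK_def)
  have cod: "f1 \<in> Cod X" "f2 \<in> Cod X" "g \<in> Cod X" using f1 f2 gc by (auto simp: Cod_star_def)
  define \<delta> where "\<delta> = min (e1 - dK K1 f1 g) (e2 - dK K2 f2 g)"
  have dpos: "\<delta> > 0" using gc by (simp add: \<delta>_def)
  have Kc: "compactin X K" "K \<noteq> {}" "K \<subseteq> dom g"
    using f1 f2 gc by (auto simp: K_def compactin_Un)
  have gin: "g \<in> BK X K g \<delta>"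
    using gc Kc dpos by (simp add: BK_def dK_def)
  have sub: "BK X K g \<delta> \<subseteq> BK X K1 f1 e1 \<inter> BK X K2 f2 e2"
  proof
    fix h assume h: "h \<in> BK X K g \<delta>"
    have hc: "h \<in> Cod_star X" "K \<subseteq> dom h" "dK K g h < \<delta>" using h by (auto simp: BK_def)
    have hcod: "h \<in> Cod X" using hc by (simp add: Cod_star_def)
    have "dK K1 f1 h \<le> dK K1 f1 g + dK K1 g h"
      using dK_triangle[OF cod(1,3) hcod f1(3) f1(2) f1(4) gc(2)] hc(2) K_def by auto
    moreover have "dK K1 g h \<le> dK K g h"
      using dK_mono[OF cod(3) hcod Kc(1) f1(2) _ Kc(3) hc(2)] K_def by auto
    moreover have "dK K2 f2 h \<le> dK K2 f2 g + dK K2 g h"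
      using dK_triangle[OF cod(2,3) hcod f2(3) f2(2) f2(4) gc(3)] hc(2) K_def by auto
    moreover have "dK K2 g h \<le> dK K g h"
      using dK_mono[OF cod(3) hcod Kc(1) f2(2) _ Kc(3) hc(2)] K_def by auto
    ultimately have "dK K1 f1 h < e1" "dK K2 f2 h < e2" using hc(3) \<delta>_def by auto
    then show "h \<in> BK X K1 f1 e1 \<inter> BK X K2 f2 e2"
      using hc K_def by (auto simp: BK_def)
  qed
  show ?thesis using gin sub Kc dpos by blast
qed

theorem mainTheorem4:
  fixes X :: "'a topology"
  shows "basis_for_topology_on (Cod X :: ('a \<rightharpoonup> 'b::metric_space) set)
           ({BK X K f \<epsilon> | f K \<epsilon>. f \<in> Cod_star X \<and> K \<noteq> {} \<and> compactin X K
                                 \<and> K \<subseteq> dom f \<and> \<epsilon> > 0} \<union> {Cod X})"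
proof -
  define B where "B = ({BK X K f \<epsilon> | f K \<epsilon>. f \<in> Cod_star X \<and> K \<noteq> {} \<and> compactin X K
                                 \<and> K \<subseteq> dom f \<and> \<epsilon> > 0} \<union> {Cod X :: ('a \<rightharpoonup> 'b) set})"
  have Bsub: "\<And>b. b \<in> B \<Longrightarrow> b \<subseteq> Cod X"
    by (auto simp: B_def BK_def Cod_star_def)
  have CB: "Cod X \<in> B" by (simp add: B_def)
  have int: "\<exists>b3\<in>B. x \<in> b3 \<and> b3 \<subseteq> b1 \<inter> b2"
    if hb: "b1 \<in> B" "b2 \<in> B" "x \<in> b1" "x \<in> b2" for b1 b2 x
  proof (cases "b1 = Cod X")
    case True
    then show ?thesis using that Bsub by (intro bexI[of _ b2]) auto
  next
    case F1: False
    show ?thesis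
    proof (cases "b2 = Cod X")
      case True
      then show ?thesis using that Bsub by (intro bexI[of _ b1]) auto
    next
      case False
      obtain f1 K1 e1 where 1: "b1 = BK X K1 f1 e1" "f1 \<in> Cod_star X" "K1 \<noteq> {}" "compactin X K1"
        "K1 \<subseteq> dom f1" "e1 > 0" using hb(1) F1 unfolding B_def by blast
      obtain f2 K2 e2 where 2: "b2 = BK X K2 f2 e2" "f2 \<in> Cod_star X" "K2 \<noteq> {}" "compactin X K2"
        "K2 \<subseteq> dom f2" "e2 > 0" using hb(2) False unfolding B_def by blast
      have xs: "x \<in> Cod_star X" using hb(3) 1(1) by (simp add: BK_def)
      obtain K \<delta> where K: "x \<in> BK X K x \<delta>" "BK X K x \<delta> \<subseteq> b1 \<inter> b2"
        "K \<noteq> {}" "compactin X K" "K \<subseteq> dom x" "\<delta> > 0"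
        using basis_step[OF 1(2-6) 2(2-6), of x] hb 1(1) 2(1) by blast
      have "BK X K x \<delta> \<in> B" unfolding B_def using K xs by blast
      then show ?thesis using K by blast
    qed
  qed
  define P where "P = (\<lambda>U. \<exists>\<U>\<subseteq>B. \<Union>\<U> = U)"
  have ist: "istopology P"
    unfolding istopology_def
  proof (intro conjI allI impI)
    fix S T assume "P S" "P T"
    then obtain US UT where U: "US \<subseteq> B" "\<Union>US = S" "UT \<subseteq> B" "\<Union>UT = T" by (auto simp: P_def)
    have "S \<inter> T = \<Union>{b\<in>B. b \<subseteq> S \<inter> T}"
    proof
      show "S \<inter> T \<subseteq> \<Union>{b\<in>B. b \<subseteq> S \<inter> T}"
      proof
        fix x assume "x \<in> S \<inter> T"
        then obtain b1 b2 where "b1 \<in> US" "b2 \<in> UT" "x \<in> b1" "x \<in> b2" using U by auto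
        with int[of b1 b2 x] U obtain b3 where "b3 \<in> B" "x \<in> b3" "b3 \<subseteq> b1 \<inter> b2" by blast
        moreover have "b1 \<subseteq> S" "b2 \<subseteq> T" using \<open>b1 \<in> US\<close> \<open>b2 \<in> UT\<close> U by auto
        ultimately show "x \<in> \<Union>{b\<in>B. b \<subseteq> S \<inter> T}" by blast
      qed
    qed auto
    then show "P (S \<inter> T)" unfolding P_def by (intro exI[of _ "{b\<in>B. b \<subseteq> S \<inter> T}"]) auto
  next
    fix KK assume "\<forall>K\<in>KK. P K"
    then have "\<forall>K\<in>KK. \<exists>U. U \<subseteq> B \<and> \<Union>U = K" by (auto simp: P_def)
    then obtain F where F: "\<forall>K\<in>KK. F K \<subseteq> B \<and> \<Union>(F K) = K" by metis
    have "\<Union>(F ` KK) \<subseteq> B" using F by auto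
    moreover have "\<Union>(\<Union>(F ` KK)) = \<Union>KK"
    proof -
      have "\<Union>(\<Union>(F ` KK)) = (\<Union>K\<in>KK. \<Union>(F K))" by auto
      also have "\<dots> = (\<Union>K\<in>KK. K)" using F by (intro SUP_cong) auto
      finally show ?thesis by simp
    qed
    ultimately show "P (\<Union>KK)" unfolding P_def by blast
  qed
  define T where "T = topology P"
  have oT: "openin T = P" using ist by (simp add: T_def)
  have "topspace T = Cod X"
  proof -
    have "topspace T = \<Union>{U. P U}" by (simp add: topspace_def oT)
    also have "\<dots> = Cod X"
    proof
      show "\<Union>{U. P U} \<subseteq> Cod X" using Bsub by (auto simp: P_def)
      show "Cod X \<subseteq> \<Union>{U. P U}" using CB unfolding P_def by (intro Union_upper) (auto intro!: exI[of _ "{Cod X}"])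
    qed
    finally show ?thesis .
  qed
  then show ?thesis unfolding basis_for_topology_on_def B_def[symmetric]
    by (intro exI[of _ T]) (simp add: oT P_def)
qed

end
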